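(* Let $A,B\in\mathrm{SL}_2\mathbb{Z}$ be noncommuting, well oriented, with $2\le\mathrm{tr}(A)<\mathrm{tr}(B)$. For every $n\ge1$, any word $w$ of length $n$ such that $[w]$ is maximal among the values $[u]$ for words $u$ of length $n$ does not contain the factor $a^2$.
   Context: Words are finite strings over $\{a,b\}$; a factor is a contiguous subword; $\phi$ is the homomorphism with $\phi(a)=A,\phi(b)=B$, and $[w]=\mathrm{tr}(\phi(w))$. Fixed points are for the Möbius action on $\partial\mathcal{H}=\mathbb{P}^1\mathbb{R}$; $\alpha^\pm$ ($\beta^\pm$) are the attracting/repelling fixed points of $A$ ($B$), both equal to the unique fixed point if parabolic. With $\partial\mathcal{H}$ cyclically ordered and $[\alpha,\beta]$ the closed counterclockwise interval from $\alpha$ to $\beta$, let $I^+=\{\alpha^+\}$ if $\alpha^+=\beta^+$, and otherwise the one of $[\alpha^+,\beta^+],[\beta^+,\alpha^+]$ mapped into itself by both $A$ and $B$ (if it exists); define $I^-$ likewise with $A^{-1},B^{-1},\alpha^-,\beta^-$. The pair is coherently oriented if both exist, and well oriented if $A,B$ is coherently oriented but $A,B^{-1}$ is not. *)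

theory Defs
  imports "HOL-Analysis.Analysis"
begin

type_synonym imat = "int^2^2"

definition SL2Z :: "imat set" where
  "SL2Z = {M. det M = 1}"

text \<open>Inverse of a matrix in SL(2,Z) (adjugate).\<close>
definition inv2 :: "imat \<Rightarrow> imat" where
  "inv2 M = (\<chi> i j. if i = j then M $ (if i = 1 then 2 else 1) $ (if i = 1 then 2 else 1)
                      else - M $ i $ j)"

datatype letter = La | Lb

fun phi :: "imat \<Rightarrow> imat \<Rightarrow> letter list \<Rightarrow> imat" where
  "phi A B [] = mat 1"
| "phi A B (La # w) = A ** phi A B w"
| "phi A B (Lb # w) = B ** phi A B w"

definition wtr :: "imat \<Rightarrow> imat \<Rightarrow> letter list \<Rightarrow> int" where
  "wtr A B w = trace (phi A B w)"

definition has_factor :: "letter list \<Rightarrow> letter list \<Rightarrow> bool" where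
  "has_factor f w \<longleftrightarrow> (\<exists>u v. w = u @ f @ v)"

text \<open>P^1(R) = R \<union> {\<infinity>}: Some x is the point [x:1], None is \<infinity> = [1:0].\<close>
type_synonym bpt = "real option"

definition rmat :: "imat \<Rightarrow> real^2^2" where
  "rmat M = (\<chi> i j. real_of_int (M $ i $ j))"

definition mob :: "imat \<Rightarrow> bpt \<Rightarrow> bpt" where
  "mob M z = (let p = real_of_int (M$1$1); q = real_of_int (M$1$2);
                  r = real_of_int (M$2$1); s = real_of_int (M$2$2) in
     (case z of
        Some x \<Rightarrow> (if r * x + s = 0 then None else Some ((p * x + q) / (r * x + s)))
      | None \<Rightarrow> (if r = 0 then None else Some (p / r))))"

definition proj :: "real^2 \<Rightarrow> bpt" where
  "proj v = (if v $ 2 \<noteq> 0 then Some (v $ 1 / v $ 2) else None)"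

text \<open>For a parabolic element both equal its unique fixed point.\<close>
definition is_attr_fix :: "imat \<Rightarrow> bpt \<Rightarrow> bool" where
  "is_attr_fix M z \<longleftrightarrow> (\<exists>v l. v \<noteq> 0 \<and> rmat M *v v = l *\<^sub>R v \<and> proj v = z \<and>
      (\<forall>w m. w \<noteq> 0 \<and> rmat M *v w = m *\<^sub>R w \<longrightarrow> \<bar>m\<bar> \<le> \<bar>l\<bar>))"

definition is_rep_fix :: "imat \<Rightarrow> bpt \<Rightarrow> bool" where
  "is_rep_fix M z \<longleftrightarrow> (\<exists>v l. v \<noteq> 0 \<and> rmat M *v v = l *\<^sub>R v \<and> proj v = z \<and>
      (\<forall>w m. w \<noteq> 0 \<and> rmat M *v w = m *\<^sub>R w \<longrightarrow> \<bar>l\<bar> \<le> \<bar>m\<bar>))"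

definition attr_fix :: "imat \<Rightarrow> bpt" where
  "attr_fix M = (THE z. is_attr_fix M z)"

definition rep_fix :: "imat \<Rightarrow> bpt" where
  "rep_fix M = (THE z. is_rep_fix M z)"

text \<open>Closed counterclockwise interval [x,y] of P^1(R), oriented as the boundary of
  the upper half plane (increasing along R, then through \<infinity>).\<close>
fun cint :: "bpt \<Rightarrow> bpt \<Rightarrow> bpt set" where
  "cint (Some x) (Some y) =
     (if x \<le> y then Some ` {x..y} else Some ` {x..} \<union> {None} \<union> Some ` {..y})"
| "cint (Some x) None = Some ` {x..} \<union> {None}"
| "cint None (Some y) = {None} \<union> Some ` {..y}"
| "cint None None = {None}"

definition I_exists :: "imat \<Rightarrow> imat \<Rightarrow> bpt \<Rightarrow> bpt \<Rightarrow> bool" where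
  "I_exists M N x y \<longleftrightarrow> x = y \<or>
     (\<exists>J \<in> {cint x y, cint y x}. mob M ` J \<subseteq> J \<and> mob N ` J \<subseteq> J)"

definition coherently_oriented :: "imat \<Rightarrow> imat \<Rightarrow> bool" where
  "coherently_oriented A B \<longleftrightarrow>
     I_exists A B (attr_fix A) (attr_fix B) \<and>
     I_exists (inv2 A) (inv2 B) (rep_fix A) (rep_fix B)"

definition well_oriented :: "imat \<Rightarrow> imat \<Rightarrow> bool" where
  "well_oriented A B \<longleftrightarrow> coherently_oriented A B \<and> \<not> coherently_oriented A (inv2 B)"

end

theory Submission
  imports Defs
begin

definition om :: "real \<times> real \<Rightarrow> real \<times> real \<Rightarrow> real" where
  "om a b = fst a * snd b - snd a * fst b"

fun pv :: "bpt \<Rightarrow> real \<times> real" where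
  "pv (Some x) = (x, 1)"
| "pv None = (1, 0)"

definition cyc :: "bpt \<Rightarrow> bpt \<Rightarrow> bpt \<Rightarrow> real" where
  "cyc p q r = om (pv p) (pv q) * om (pv q) (pv r) * om (pv r) (pv p)"

definition app :: "imat \<Rightarrow> real \<times> real \<Rightarrow> real \<times> real" where
  "app M w = (real_of_int (M$1$1) * fst w + real_of_int (M$1$2) * snd w,
              real_of_int (M$2$1) * fst w + real_of_int (M$2$2) * snd w)"

definition QF :: "imat \<Rightarrow> real \<times> real \<Rightarrow> real" where
  "QF M w = om w (app M w)"

definition sm :: "real \<Rightarrow> real \<times> real \<Rightarrow> real \<times> real" where
  "sm k w = (k * fst w, k * snd w)"

lemma det1: "M \<in> SL2Z \<Longrightarrow> real_of_int (M$1$1) * real_of_int (M$2$2) - real_of_int (M$1$2) * real_of_int (M$2$1) = 1"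
proof -
  assume "M \<in> SL2Z"
  then have "M$1$1 * M$2$2 - M$1$2 * M$2$1 = 1" by (simp add: SL2Z_def det_2)
  then have "real_of_int (M$1$1 * M$2$2 - M$1$2 * M$2$1) = 1" by simp
  then show ?thesis by simp
qed

lemma om_app: "M \<in> SL2Z \<Longrightarrow> om (app M a) (app M b) = om a b"
proof -
  assume "M \<in> SL2Z"
  note d = det1[OF this]
  have "om (app M a) (app M b) = (real_of_int (M$1$1) * real_of_int (M$2$2) - real_of_int (M$1$2) * real_of_int (M$2$1)) * om a b"
    by (simp add: om_def app_def algebra_simps)
  then show ?thesis using d by simp
qed

lemma om_sm1: "om (sm k a) b = k * om a b" and om_sm2: "om a (sm k b) = k * om a b"
  by (simp_all add: om_def sm_def algebra_simps)

lemma om_anti: "om a b = - om b a" by (simp add: om_def)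
lemma om_self: "om a a = 0" by (simp add: om_def)

lemma om_vec_eq: "om (pv p) (pv q) = 0 \<longleftrightarrow> p = q"
  by (cases p; cases q; simp add: om_def)

lemma vec_nz: "pv p \<noteq> (0,0)"
  by (cases p) auto

lemma cint_char:
  assumes "x \<noteq> y"
  shows "q \<in> cint x y \<longleftrightarrow> q = x \<or> q = y \<or> cyc x q y > 0"
proof (cases x)
  case None
  then obtain b where y: "y = Some b" using assms by (cases y) auto
  show ?thesis
  proof (cases q)
    case None then show ?thesis using \<open>x = None\<close> y by (simp add: cyc_def om_def)
  next
    case (Some c)
    have "cyc x q y = b - c" using None y Some by (simp add: cyc_def om_def)
    then show ?thesis using None y Some by auto
  qed
next
  case (Some a)
  note x = this
  show ?thesis
  proof (cases y)
    case None
    show ?thesis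
    proof (cases q)
      case None then show ?thesis using x \<open>y = None\<close> by (simp add: cyc_def om_def)
    next
      case (Some c)
      have "cyc x q y = c - a" using x \<open>y = None\<close> Some by (simp add: cyc_def om_def)
      then show ?thesis using x \<open>y = None\<close> Some by auto
    qed
  next
    case (Some b)
    note y = this
    have ab: "a \<noteq> b" using assms x y by auto
    show ?thesis
    proof (cases q)
      case None
      have "cyc x q y = a - b" using x y None by (simp add: cyc_def om_def)
      then show ?thesis using x y None by auto
    next
      case (Some c)
      have e: "cyc x q y = (a - c) * (c - b) * (b - a)" using x y Some by (simp add: cyc_def om_def)
      show ?thesis
      proof (cases "a \<le> b")
        case True
        then have ab': "a < b" using ab by simp
        have "(a - c) * (c - b) * (b - a) > 0 \<longleftrightarrow> a < c \<and> c < b"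
        proof
          assume h: "(a - c) * (c - b) * (b - a) > 0"
          then have "(a - c) * (c - b) > 0" using ab' by (simp add: zero_less_mult_iff)
          then show "a < c \<and> c < b" using ab' by (auto simp: zero_less_mult_iff)
        next
          assume "a < c \<and> c < b"
          then show "(a - c) * (c - b) * (b - a) > 0" using ab' by (simp add: mult_pos_pos mult_neg_neg)
        qed
        then show ?thesis using x y Some e True by auto
      next
        case False
        then have ab': "b < a" by simp
        have "(a - c) * (c - b) * (b - a) > 0 \<longleftrightarrow> a < c \<or> c < b"
        proof
          assume h: "(a - c) * (c - b) * (b - a) > 0"
          then have "(a - c) * (c - b) < 0" using ab' by (simp add: zero_less_mult_iff mult_less_0_iff)
          then show "a < c \<or> c < b" using ab' by (auto simp: mult_less_0_iff)
        next
          assume "a < c \<or> c < b"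
          then have "(a - c) * (c - b) < 0" using ab' by (auto simp: mult_less_0_iff)
          then show "(a - c) * (c - b) * (b - a) > 0" using ab' by (simp add: mult_neg_neg)
        qed
        then show ?thesis using x y Some e False by auto
      qed
    qed
  qed
qed

lemma mob_vec:
  assumes "M \<in> SL2Z"
  shows "\<exists>k. k \<noteq> 0 \<and> pv (mob M z) = sm k (app M (pv z))"
proof -
  define p where "p = real_of_int (M$1$1)"
  define q where "q = real_of_int (M$1$2)"
  define r where "r = real_of_int (M$2$1)"
  define s where "s = real_of_int (M$2$2)"
  have d: "p * s - q * r = 1" using det1[OF assms] by (simp add: p_def q_def r_def s_def)
  have mobe: "mob M w = (case w of
        Some x \<Rightarrow> (if r * x + s = 0 then None else Some ((p * x + q) / (r * x + s)))
      | None \<Rightarrow> (if r = 0 then None else Some (p / r)))" for w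
    unfolding p_def q_def r_def s_def mob_def Let_def by (rule refl)
  have appe: "app M w = (p * fst w + q * snd w, r * fst w + s * snd w)" for w
    by (simp add: app_def p_def q_def r_def s_def)
  show ?thesis
  proof (cases z)
    case None
    show ?thesis
    proof (cases "r = 0")
      case True
      then have "p \<noteq> 0" using d by auto
      then show ?thesis using None True
        by (intro exI[of _ "1/p"]) (simp add: mobe appe sm_def)
    next
      case False
      then show ?thesis using None
        by (intro exI[of _ "1/r"]) (simp add: mobe appe sm_def)
    qed
  next
    case (Some x)
    show ?thesis
    proof (cases "r * x + s = 0")
      case True
      have "p * x + q \<noteq> 0"
      proof
        assume h: "p * x + q = 0"
        have "(p * s - q * r) = p * (r * x + s) - r * (p * x + q)" by (simp add: algebra_simps)
        then show False using h True d by simp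
      qed
      then show ?thesis using Some True
        by (intro exI[of _ "1/(p*x+q)"]) (simp add: mobe appe sm_def)
    next
      case False
      then show ?thesis using Some
        by (intro exI[of _ "1/(r*x+s)"]) (simp add: mobe appe sm_def)
    qed
  qed
qed

lemma cyc_mob:
  assumes "M \<in> SL2Z"
  shows "cyc (mob M a) (mob M b) (mob M c) > 0 \<longleftrightarrow> cyc a b c > 0"
proof -
  obtain ka where ka: "ka \<noteq> 0" "pv (mob M a) = sm ka (app M (pv a))" using mob_vec[OF assms] by blast
  obtain kb where kb: "kb \<noteq> 0" "pv (mob M b) = sm kb (app M (pv b))" using mob_vec[OF assms] by blast
  obtain kc where kc: "kc \<noteq> 0" "pv (mob M c) = sm kc (app M (pv c))" using mob_vec[OF assms] by blast
  have "cyc (mob M a) (mob M b) (mob M c) = (ka*kb*kc)^2 * cyc a b c"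
    unfolding cyc_def ka(2) kb(2) kc(2) om_sm1 om_sm2 om_app[OF assms]
    by (simp add: power2_eq_square algebra_simps)
  moreover have "(ka*kb*kc)^2 > 0" using ka kb kc by simp
  ultimately show ?thesis by (simp add: zero_less_mult_iff)
qed

lemma cyc_rot: "cyc a b c = cyc b c a"
  by (simp add: cyc_def algebra_simps)

lemma cyc_swap: "cyc a c b = - cyc a b c"
  by (simp add: cyc_def om_def algebra_simps)

lemma om_trans:
  assumes "om a b * om b c * om c a > 0" "om a c * om c d * om d a > 0"
  shows "om a b * om b d * om d a > 0"
proof -
  define P1 where "P1 = om a b * om b c * om c a"
  define P2 where "P2 = om a c * om c d * om d a"
  define P3 where "P3 = om a b * om b d * om d a"
  have e: "P3 * (om a c)^2 = (om a b)^2 * P2 + (om d a)^2 * P1"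
    by (simp add: P1_def P2_def P3_def om_def power2_eq_square algebra_simps)
  have "om a b \<noteq> 0" using assms(1) by auto
  then have "(om a b)^2 > 0" by simp
  then have "(om a b)^2 * P2 > 0" using assms(2) P2_def by simp
  moreover have "(om d a)^2 * P1 \<ge> 0" using assms(1) P1_def by simp
  ultimately have "P3 * (om a c)^2 > 0" using e by linarith
  moreover have "(om a c)^2 \<ge> 0" by simp
  ultimately show ?thesis unfolding P3_def by (simp add: zero_less_mult_iff)
qed

lemma cyc_trans: "cyc a b c > 0 \<Longrightarrow> cyc a c d > 0 \<Longrightarrow> cyc a b d > 0"
  unfolding cyc_def by (rule om_trans)

lemma pos_mult_iff: "(c::real) > 0 \<Longrightarrow> c * a > 0 \<longleftrightarrow> a > 0"
  by (simp add: zero_less_mult_iff)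


lemma app_sm: "app M (sm k w) = sm k (app M w)"
  by (simp add: app_def sm_def algebra_simps)

lemma mob_fix:
  assumes "M \<in> SL2Z" "om (pv x) (app M (pv x)) = 0"
  shows "mob M x = x"
proof -
  obtain k where k: "k \<noteq> 0" "pv (mob M x) = sm k (app M (pv x))" using mob_vec[OF assms(1)] by blast
  have "om (pv x) (pv (mob M x)) = 0" using k assms(2) by (simp add: om_sm2)
  then show ?thesis using om_vec_eq by metis
qed

lemma eig_QF: "app M w = sm l w \<Longrightarrow> QF M w = 0"
  by (simp add: QF_def om_sm2 om_self)

lemma cyc_fix1:
  assumes "M \<in> SL2Z" "app M (pv x) = sm l (pv x)" "l > 0"
  shows "cyc x (mob M y) y > 0 \<longleftrightarrow> (x \<noteq> y \<and> QF M (pv y) > 0)"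
proof -
  obtain k where k: "k \<noteq> 0" "pv (mob M y) = sm k (app M (pv y))" using mob_vec[OF assms(1)] by blast
  have "om (pv x) (app M (pv y)) = om (sm (1/l) (app M (pv x))) (app M (pv y))"
    using assms(2,3) by (simp add: sm_def)
  also have "\<dots> = (1/l) * om (pv x) (pv y)" by (simp add: om_sm1 om_app[OF assms(1)])
  finally have e1: "om (pv x) (app M (pv y)) = (1/l) * om (pv x) (pv y)" .
  have eq: "cyc x (mob M y) y = (k^2 * (1/l)) * ((om (pv x) (pv y))^2 * QF M (pv y))"
    unfolding cyc_def k(2) om_sm1 om_sm2 e1 QF_def
    by (subst om_anti[of "app M (pv y)"], subst om_anti[of "pv y" "pv x"]) (simp add: power2_eq_square algebra_simps)
  have pos: "k^2 * (1/l) > 0" using k assms(3) by simp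
  have "cyc x (mob M y) y > 0 \<longleftrightarrow> (om (pv x) (pv y))^2 * QF M (pv y) > 0"
    unfolding eq using pos_mult_iff[OF pos] by blast
  also have "\<dots> \<longleftrightarrow> x \<noteq> y \<and> QF M (pv y) > 0"
    using om_vec_eq[of x y] by (auto simp: zero_less_mult_iff)
  finally show ?thesis .
qed

lemma cyc_fix2:
  assumes "M \<in> SL2Z" "app M (pv y) = sm l (pv y)" "l > 0"
  shows "cyc x (mob M x) y > 0 \<longleftrightarrow> (x \<noteq> y \<and> QF M (pv x) < 0)"
proof -
  obtain k where k: "k \<noteq> 0" "pv (mob M x) = sm k (app M (pv x))" using mob_vec[OF assms(1)] by blast
  have "om (app M (pv x)) (pv y) = om (app M (pv x)) (sm (1/l) (app M (pv y)))"
    using assms(2,3) by (simp add: sm_def)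
  also have "\<dots> = (1/l) * om (pv x) (pv y)" by (simp add: om_sm2 om_app[OF assms(1)])
  finally have e1: "om (app M (pv x)) (pv y) = (1/l) * om (pv x) (pv y)" .
  have eq: "cyc x (mob M x) y = (k^2 * (1/l)) * ((om (pv x) (pv y))^2 * (- QF M (pv x)))"
    unfolding cyc_def k(2) om_sm1 om_sm2 e1 QF_def
    by (subst om_anti[of "pv y" "pv x"]) (simp add: power2_eq_square algebra_simps)
  have pos: "k^2 * (1/l) > 0" using k assms(3) by simp
  have "cyc x (mob M x) y > 0 \<longleftrightarrow> (om (pv x) (pv y))^2 * (- QF M (pv x)) > 0"
    unfolding eq using pos_mult_iff[OF pos] by blast
  also have "\<dots> \<longleftrightarrow> x \<noteq> y \<and> QF M (pv x) < 0"
    using om_vec_eq[of x y] by (cases "x = y") (auto simp: mult_less_0_iff zero_less_mult_iff)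
  finally show ?thesis .
qed

lemma cyc_deg: "cyc a b a = 0" "cyc a a b = 0" "cyc a b b = 0"
  by (simp_all add: cyc_def om_self)

lemma mob_fix_eig:
  assumes "M \<in> SL2Z" "app M (pv x) = sm l (pv x)"
  shows "mob M x = x"
  using mob_fix[OF assms(1)] assms(2) by (simp add: om_sm2 om_self)

lemma mob_fix_QF:
  assumes "M \<in> SL2Z" "QF M (pv x) = 0"
  shows "mob M x = x"
  using mob_fix[OF assms(1)] assms(2) by (simp add: QF_def)

lemma inv_F1:
  assumes M: "M \<in> SL2Z" and e: "app M (pv x) = sm l (pv x)" and l: "l > 0"
    and xy: "x \<noteq> y" and Q: "QF M (pv y) \<ge> 0"
  shows "mob M ` cint x y \<subseteq> cint x y"
proof
  fix z assume "z \<in> mob M ` cint x y"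
  then obtain q where q: "q \<in> cint x y" and z: "z = mob M q" by blast
  have Mx: "mob M x = x" by (rule mob_fix_eig[OF M e])
  have My: "mob M y = y \<or> cyc x (mob M y) y > 0"
  proof (cases "QF M (pv y) = 0")
    case True then show ?thesis using mob_fix_QF[OF M] by blast
  next
    case False then have "QF M (pv y) > 0" using Q by simp
    then show ?thesis using cyc_fix1[OF M e l] xy by blast
  qed
  have Myin: "mob M y \<in> cint x y" using My cint_char[OF xy] by blast
  from q cint_char[OF xy] consider "q = x" | "q = y" | "cyc x q y > 0" by blast
  then show "z \<in> cint x y"
  proof cases
    case 1 then show ?thesis using z Mx cint_char[OF xy] by simp
  next
    case 2 then show ?thesis using z Myin by simp
  next
    case 3
    then have c1: "cyc x (mob M q) (mob M y) > 0" using cyc_mob[OF M, of x q y] Mx by simp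
    show ?thesis
    proof (cases "mob M y = y")
      case True then show ?thesis using c1 z cint_char[OF xy] by simp
    next
      case False
      then have "cyc x (mob M y) y > 0" using My by simp
      then have "cyc x (mob M q) y > 0" using cyc_trans c1 by blast
      then show ?thesis using z cint_char[OF xy] by simp
    qed
  qed
qed

lemma inv_F2:
  assumes M: "M \<in> SL2Z" and e: "app M (pv y) = sm l (pv y)" and l: "l > 0"
    and xy: "x \<noteq> y" and Q: "QF M (pv x) \<le> 0"
  shows "mob M ` cint x y \<subseteq> cint x y"
proof
  fix z assume "z \<in> mob M ` cint x y"
  then obtain q where q: "q \<in> cint x y" and z: "z = mob M q" by blast
  have My: "mob M y = y" by (rule mob_fix_eig[OF M e])
  have Mx: "mob M x = x \<or> cyc x (mob M x) y > 0"
  proof (cases "QF M (pv x) = 0")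
    case True then show ?thesis using mob_fix_QF[OF M] by blast
  next
    case False then have "QF M (pv x) < 0" using Q by simp
    then show ?thesis using cyc_fix2[OF M e l] xy by blast
  qed
  have Mxin: "mob M x \<in> cint x y" using Mx cint_char[OF xy] by blast
  from q cint_char[OF xy] consider "q = x" | "q = y" | "cyc x q y > 0" by blast
  then show "z \<in> cint x y"
  proof cases
    case 1 then show ?thesis using z Mxin by simp
  next
    case 2 then show ?thesis using z My cint_char[OF xy] by simp
  next
    case 3
    then have c1: "cyc (mob M x) (mob M q) y > 0" using cyc_mob[OF M, of x q y] My by simp
    show ?thesis
    proof (cases "mob M x = x")
      case True then show ?thesis using c1 z cint_char[OF xy] by simp
    next
      case False
      then have "cyc x (mob M x) y > 0" using Mx by simp
      then have a: "cyc y x (mob M x) > 0" using cyc_rot[of x "mob M x" y] cyc_rot[of "mob M x" y x] by simp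
      have b: "cyc y (mob M x) (mob M q) > 0" using c1 cyc_rot[of "mob M x" "mob M q" y] cyc_rot[of "mob M q" y "mob M x"] by simp
      have "cyc y x (mob M q) > 0" using cyc_trans[OF a b] .
      then have "cyc x (mob M q) y > 0" using cyc_rot[of x "mob M q" y] cyc_rot[of "mob M q" y x] by simp
      then show ?thesis using z cint_char[OF xy] by simp
    qed
  qed
qed

lemma I_suff:
  assumes M: "M \<in> SL2Z" and N: "N \<in> SL2Z"
    and eM: "app M (pv x) = sm l (pv x)" and l: "l > 0"
    and eN: "app N (pv y) = sm m (pv y)" and m: "m > 0"
    and Q: "QF M (pv y) * QF N (pv x) \<le> 0"
  shows "I_exists M N x y"
proof (cases "x = y")
  case True then show ?thesis by (simp add: I_exists_def)
next
  case False
  then have yx: "y \<noteq> x" by simp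
  show ?thesis
  proof (cases "QF M (pv y) \<ge> 0 \<and> QF N (pv x) \<le> 0")
    case True
    have "mob M ` cint x y \<subseteq> cint x y" using inv_F1[OF M eM l False] True by blast
    moreover have "mob N ` cint x y \<subseteq> cint x y" using inv_F2[OF N eN m False] True by blast
    ultimately show ?thesis unfolding I_exists_def by blast
  next
    case F: False
    then have T: "QF M (pv y) \<le> 0 \<and> QF N (pv x) \<ge> 0" using Q
      by (auto simp: mult_le_0_iff)
    have "mob M ` cint y x \<subseteq> cint y x" using inv_F2[OF M eM l yx] T by blast
    moreover have "mob N ` cint y x \<subseteq> cint y x" using inv_F1[OF N eN m yx] T by blast
    ultimately show ?thesis unfolding I_exists_def by blast
  qed
qed

lemma I_nec:
  assumes "M \<in> SL2Z" "N \<in> SL2Z"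
    "app M (pv x) = sm l (pv x)" "l > 0"
    "app N (pv y) = sm m (pv y)" "m > 0"
    "\<not> I_exists M N x y"
  shows "QF M (pv y) * QF N (pv x) > 0"
  using I_suff[OF assms(1-6)] assms(7) by force

definition mk :: "real \<Rightarrow> real \<Rightarrow> real^2" where
  "mk a b = (\<chi> i. if i = 1 then a else b)"

lemma mk_comp [simp]: "mk a b $ 1 = a" "mk a b $ 2 = b"
  by (simp_all add: mk_def)

lemma eig_iff:
  "rmat M *v v = l *\<^sub>R v \<longleftrightarrow>
     (real_of_int (M$1$1) * v$1 + real_of_int (M$1$2) * v$2 = l * v$1 \<and>
      real_of_int (M$2$1) * v$1 + real_of_int (M$2$2) * v$2 = l * v$2)"
  by (simp add: vec_eq_iff forall_2 matrix_vector_mult_def sum_2 rmat_def)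

lemma nz_iff: "(v::real^2) \<noteq> 0 \<longleftrightarrow> v$1 \<noteq> 0 \<or> v$2 \<noteq> 0"
  by (auto simp: vec_eq_iff forall_2)

lemma proj_simp: "proj v = (if v$2 \<noteq> 0 then Some (v$1 / v$2) else None)"
  by (simp add: proj_def)

locale fixpt =
  fixes M :: imat
  assumes SL: "M \<in> SL2Z" and tr2: "trace M \<ge> 2" and nI: "M \<noteq> mat 1"
begin

definition "p = real_of_int (M$1$1)"
definition "q = real_of_int (M$1$2)"
definition "r = real_of_int (M$2$1)"
definition "s = real_of_int (M$2$2)"
definition "T = real_of_int (trace M)"
definition "lam = (T + sqrt (T^2 - 4)) / 2"
definition "lam' = (T - sqrt (T^2 - 4)) / 2"
definition "zf l = (if r \<noteq> 0 then Some ((l - s) / r) else None)"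

lemma det: "p * s - q * r = 1"
  using det1[OF SL] by (simp add: p_def q_def r_def s_def)

lemma Tps: "T = p + s"
  by (simp add: T_def p_def s_def trace_def sum_2)

lemma T2: "T \<ge> 2" using tr2 by (simp add: T_def)

lemma T2sq: "T^2 \<ge> 4"
proof -
  have "T^2 \<ge> 2^2" using T2 by (intro power_mono) auto
  then show ?thesis by simp
qed

lemma sq: "(sqrt (T^2 - 4))^2 = T^2 - 4"
  using T2sq by simp

lemma sq_nn: "sqrt (T^2 - 4) \<ge> 0" using T2sq by simp

lemma lam_prod: "lam * lam' = 1"
  using sq by (simp add: lam_def lam'_def field_simps power2_eq_square)

lemma lam_sum: "lam + lam' = T"
  by (simp add: lam_def lam'_def field_simps)

lemma lam_ge: "lam' \<le> lam" using sq_nn by (simp add: lam_def lam'_def)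

lemma lam'_pos: "lam' > 0"
proof -
  have "T + sqrt (T^2 - 4) \<ge> 2" using T2 sq_nn by linarith
  then have "lam \<ge> 1" unfolding lam_def by simp
  then have "lam' = 1 / lam" using lam_prod by (simp add: field_simps)
  then show ?thesis using \<open>lam \<ge> 1\<close> by simp
qed

lemma lam_pos: "lam > 0" using lam'_pos lam_ge by simp

lemma lam_ge1: "lam \<ge> 1"
proof -
  have "T + sqrt (T^2 - 4) \<ge> 2" using T2 sq_nn by linarith
  then show "lam \<ge> 1" unfolding lam_def by simp
qed

lemma root_iff: "l^2 - T * l + 1 = 0 \<longleftrightarrow> l = lam \<or> l = lam'"
proof -
  have "l^2 - T * l + 1 = (l - lam) * (l - lam')"
    using lam_prod lam_sum by (simp add: algebra_simps power2_eq_square) (metis distrib_left)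
  then show ?thesis by simp
qed

lemma eig_root:
  assumes "(v::real^2) \<noteq> 0" "rmat M *v v = l *\<^sub>R v"
  shows "l = lam \<or> l = lam'"
proof -
  have e1: "p * v$1 + q * v$2 = l * v$1" and e2: "r * v$1 + s * v$2 = l * v$2"
    using assms(2) by (simp_all add: eig_iff p_def q_def r_def s_def)
  have k1: "v$1 * ((p - l) * (s - l) - q * r) = 0"
  proof -
    have "v$1 * ((p - l) * (s - l) - q * r) = (s - l) * (p * v$1 + q * v$2 - l * v$1) - q * (r * v$1 + s * v$2 - l * v$2)"
      by (simp add: algebra_simps)
    then show ?thesis using e1 e2 by simp
  qed
  have k2: "v$2 * ((p - l) * (s - l) - q * r) = 0"
  proof -
    have "v$2 * ((p - l) * (s - l) - q * r) = (p - l) * (r * v$1 + s * v$2 - l * v$2) - r * (p * v$1 + q * v$2 - l * v$1)"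
      by (simp add: algebra_simps)
    then show ?thesis using e1 e2 by simp
  qed
  have "(p - l) * (s - l) - q * r = 0" using k1 k2 assms(1) nz_iff by auto
  then have "l^2 - T * l + 1 = 0" using det Tps by (simp add: algebra_simps power2_eq_square)
  then show ?thesis using root_iff by simp
qed

lemma r0: "r = 0 \<Longrightarrow> p = 1 \<and> s = 1 \<and> q \<noteq> 0"
proof -
  assume "r = 0"
  then have i: "M$2$1 = 0" by (simp add: r_def)
  have "M$1$1 * M$2$2 - M$1$2 * M$2$1 = 1" using SL by (simp add: SL2Z_def det_2)
  then have ps: "M$1$1 * M$2$2 = 1" using i by simp
  have t: "M$1$1 + M$2$2 \<ge> 2" using tr2 by (simp add: trace_def sum_2)
  from ps have "M$1$1 = 1 \<and> M$2$2 = 1 \<or> M$1$1 = -1 \<and> M$2$2 = -1"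
    using zmult_eq_1_iff by blast
  then have d: "M$1$1 = 1" "M$2$2 = 1" using t by auto
  have "M$1$2 \<noteq> 0"
  proof
    assume "M$1$2 = 0"
    then have "M = mat 1" using d i by (simp add: vec_eq_iff forall_2 mat_def)
    then show False using nI by simp
  qed
  then show ?thesis using d by (simp add: p_def s_def q_def)
qed

lemma r0_lam: "r = 0 \<Longrightarrow> lam = 1 \<and> lam' = 1"
proof -
  assume "r = 0"
  then have "T = 2" using r0 Tps by simp
  then show ?thesis by (simp add: lam_def lam'_def)
qed

lemma zf_eig:
  assumes "l = lam \<or> l = lam'"
  shows "app M (pv (zf l)) = sm l (pv (zf l))"
proof (cases "r = 0")
  case True
  then show ?thesis using r0 r0_lam assms
    by (simp add: zf_def app_def sm_def p_def[symmetric] q_def[symmetric] r_def[symmetric] s_def[symmetric])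
next
  case False
  have "l^2 - T * l + 1 = 0" using root_iff assms by simp
  then have "p * ((l - s) / r) + q = l * ((l - s) / r)"
    using False det Tps by (simp add: field_simps power2_eq_square)
  moreover have "r * ((l - s) / r) + s = l" using False by simp
  ultimately show ?thesis using False
    by (simp add: zf_def app_def sm_def p_def[symmetric] q_def[symmetric] r_def[symmetric] s_def[symmetric])
qed

lemma zf_eig_vec:
  assumes "l = lam \<or> l = lam'"
  shows "\<exists>v. v \<noteq> 0 \<and> rmat M *v v = l *\<^sub>R v \<and> proj v = zf l"
proof -
  obtain a b where ab: "pv (zf l) = (a, b)" by fastforce
  have "app M (a, b) = sm l (a, b)" using zf_eig[OF assms] ab by simp
  then have e: "p * a + q * b = l * a" "r * a + s * b = l * b"
    by (simp_all add: app_def sm_def p_def q_def r_def s_def)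
  show ?thesis
  proof (intro exI conjI)
    show "mk a b \<noteq> 0" using ab vec_nz[of "zf l"] by (auto simp: nz_iff)
    show "rmat M *v mk a b = l *\<^sub>R mk a b" using e by (simp add: eig_iff p_def q_def r_def s_def)
    show "proj (mk a b) = zf l" using ab by (cases "zf l") (auto simp: proj_simp)
  qed
qed

lemma eig_proj:
  assumes "(v::real^2) \<noteq> 0" "rmat M *v v = l *\<^sub>R v" "l = lam \<or> l = lam'"
  shows "proj v = zf l"
proof -
  have e1: "p * v$1 + q * v$2 = l * v$1" and e2: "r * v$1 + s * v$2 = l * v$2"
    using assms(2) by (simp_all add: eig_iff p_def q_def r_def s_def)
  show ?thesis
  proof (cases "r = 0")
    case True
    then have "p = 1" "q \<noteq> 0" "l = 1" using r0 r0_lam assms(3) by auto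
    then have "v$2 = 0" using e1 by simp
    then show ?thesis using True by (simp add: proj_simp zf_def)
  next
    case False
    have w1: "v$1 = (l - s) * v$2 / r" using e2 False by (simp add: field_simps)
    have "v$2 \<noteq> 0" using w1 assms(1) nz_iff by auto
    then show ?thesis using False w1 by (simp add: proj_simp zf_def)
  qed
qed

lemma attr_is: "is_attr_fix M z \<longleftrightarrow> z = zf lam"
proof
  assume "is_attr_fix M z"
  then obtain v l where v: "v \<noteq> 0" "rmat M *v v = l *\<^sub>R v" "proj v = z"
    and mx: "\<forall>w m. w \<noteq> 0 \<and> rmat M *v w = m *\<^sub>R w \<longrightarrow> \<bar>m\<bar> \<le> \<bar>l\<bar>"
    unfolding is_attr_fix_def by blast
  obtain w where w: "w \<noteq> 0" "rmat M *v w = lam *\<^sub>R w" using zf_eig_vec[of lam] by auto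
  have "\<bar>lam\<bar> \<le> \<bar>l\<bar>" using mx w by blast
  moreover have "l = lam \<or> l = lam'" using eig_root v by blast
  ultimately have "l = lam" using lam_ge lam'_pos by auto
  then show "z = zf lam" using eig_proj v by auto
next
  assume z: "z = zf lam"
  obtain v where v: "v \<noteq> 0" "rmat M *v v = lam *\<^sub>R v" "proj v = zf lam" using zf_eig_vec[of lam] by auto
  have "\<forall>w m. w \<noteq> 0 \<and> rmat M *v w = m *\<^sub>R w \<longrightarrow> \<bar>m\<bar> \<le> \<bar>lam\<bar>"
    using eig_root lam_ge lam'_pos by fastforce
  then show "is_attr_fix M z" unfolding is_attr_fix_def using v z by blast
qed

lemma rep_is: "is_rep_fix M z \<longleftrightarrow> z = zf lam'"
proof
  assume "is_rep_fix M z"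
  then obtain v l where v: "v \<noteq> 0" "rmat M *v v = l *\<^sub>R v" "proj v = z"
    and mx: "\<forall>w m. w \<noteq> 0 \<and> rmat M *v w = m *\<^sub>R w \<longrightarrow> \<bar>l\<bar> \<le> \<bar>m\<bar>"
    unfolding is_rep_fix_def by blast
  obtain w where w: "w \<noteq> 0" "rmat M *v w = lam' *\<^sub>R w" using zf_eig_vec[of lam'] by auto
  have "\<bar>l\<bar> \<le> \<bar>lam'\<bar>" using mx w by blast
  moreover have "l = lam \<or> l = lam'" using eig_root v by blast
  ultimately have "l = lam'" using lam_ge lam'_pos by auto
  then show "z = zf lam'" using eig_proj v by auto
next
  assume z: "z = zf lam'"
  obtain v where v: "v \<noteq> 0" "rmat M *v v = lam' *\<^sub>R v" "proj v = zf lam'" using zf_eig_vec[of lam'] by auto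
  have "\<forall>w m. w \<noteq> 0 \<and> rmat M *v w = m *\<^sub>R w \<longrightarrow> \<bar>lam'\<bar> \<le> \<bar>m\<bar>"
    using eig_root lam_ge lam'_pos by fastforce
  then show "is_rep_fix M z" unfolding is_rep_fix_def using v z by blast
qed

lemma attr_fix_eq: "attr_fix M = zf lam"
  unfolding attr_fix_def by (rule the_equality) (simp_all add: attr_is)

lemma rep_fix_eq: "rep_fix M = zf lam'"
  unfolding rep_fix_def by (rule the_equality) (simp_all add: rep_is)

lemma attr_eig: "app M (pv (attr_fix M)) = sm lam (pv (attr_fix M))"
  using attr_fix_eq zf_eig by simp

lemma rep_eig: "app M (pv (rep_fix M)) = sm lam' (pv (rep_fix M))"
  using rep_fix_eq zf_eig by simp

end

lemma inv2_comp [simp]: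
  "inv2 M $ 1 $ 1 = M $ 2 $ 2" "inv2 M $ 1 $ 2 = - M $ 1 $ 2"
  "inv2 M $ 2 $ 1 = - M $ 2 $ 1" "inv2 M $ 2 $ 2 = M $ 1 $ 1"
  by (simp_all add: inv2_def)

lemma inv2_SL: "M \<in> SL2Z \<Longrightarrow> inv2 M \<in> SL2Z"
  by (simp add: SL2Z_def det_2 algebra_simps)

lemma inv2_inv2: "inv2 (inv2 M) = M"
  by (simp add: vec_eq_iff forall_2)

lemma trace_inv2: "trace (inv2 M) = trace M"
  by (simp add: trace_def sum_2)

lemma QF_inv2: "QF (inv2 M) w = - QF M w"
  by (simp add: QF_def om_def app_def algebra_simps)

lemma app_inv2_app: "M \<in> SL2Z \<Longrightarrow> app (inv2 M) (app M w) = w"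
proof -
  assume "M \<in> SL2Z"
  note d = det1[OF this]
  obtain a b where w: "w = (a, b)" by fastforce
  have "app (inv2 M) (app M w) =
    ((real_of_int (M$1$1) * real_of_int (M$2$2) - real_of_int (M$1$2) * real_of_int (M$2$1)) * a,
     (real_of_int (M$1$1) * real_of_int (M$2$2) - real_of_int (M$1$2) * real_of_int (M$2$1)) * b)"
    by (simp add: app_def w algebra_simps)
  then show ?thesis using d w by simp
qed

lemma app_inv2_eig:
  assumes "M \<in> SL2Z" "app M w = sm l w" "l \<noteq> 0"
  shows "app (inv2 M) w = sm (1/l) w"
proof -
  have "w = app (inv2 M) (app M w)" using app_inv2_app[OF assms(1)] by simp
  also have "\<dots> = app (inv2 M) (sm l w)" using assms(2) by simp
  also have "\<dots> = sm l (app (inv2 M) w)" by (simp add: app_sm)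
  finally have "w = sm l (app (inv2 M) w)" .
  then have "sm (1/l) w = app (inv2 M) w" using assms(3) by (simp add: sm_def prod_eq_iff)
  then show ?thesis by simp
qed

lemma trace_mat1: "trace (mat 1 :: imat) = 2"
  by (simp add: trace_def sum_2 mat_def)

lemma om_zero_par:
  assumes "om u v = 0" "v \<noteq> (0, 0)"
  shows "\<exists>k. u = sm k v"
proof (cases "fst v = 0")
  case True
  then have "snd v \<noteq> 0" using assms(2) by (cases v) auto
  then show ?thesis using assms(1) True
    by (intro exI[of _ "snd u / snd v"]) (cases u, cases v, auto simp: om_def sm_def)
next
  case False
  then show ?thesis using assms(1)
    by (intro exI[of _ "fst u / fst v"]) (cases u, cases v, auto simp: om_def sm_def field_simps)
qed

lemma QF_sm: "QF M (sm k w) = k^2 * QF M w"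
  by (simp add: QF_def app_sm om_sm1 om_sm2 power2_eq_square)

definition cu :: "real \<times> real \<Rightarrow> real \<times> real \<Rightarrow> real \<times> real \<Rightarrow> real" where
  "cu u v w = om w v / om u v"
definition cv :: "real \<times> real \<Rightarrow> real \<times> real \<Rightarrow> real \<times> real \<Rightarrow> real" where
  "cv u v w = om u w / om u v"

definition "c11 u v M = cu u v (app M u)"
definition "c21 u v M = cv u v (app M u)"
definition "c12 u v M = cu u v (app M v)"
definition "c22 u v M = cv u v (app M v)"

lemma cramer: "om (app M w) v * om u v = om w v * om (app M u) v + om u w * om (app M v) v"
  by (simp add: om_def app_def algebra_simps)

lemma cramer2: "om u (app M w) * om u v = om w v * om u (app M u) + om u w * om u (app M v)"
  by (simp add: om_def app_def algebra_simps)

lemma cramer': "om u v * om (app M w) v = om u w * om (app M v) v + om w v * om (app M u) v"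
  by (simp add: om_def app_def algebra_simps)

lemma cramer2': "om u v * om u (app M w) = om u w * om u (app M v) + om w v * om u (app M u)"
  by (simp add: om_def app_def algebra_simps)

lemma cu_app: "om u v \<noteq> 0 \<Longrightarrow> cu u v (app M w) = cu u v w * c11 u v M + cv u v w * c12 u v M"
  unfolding cu_def cv_def c11_def c12_def
  using cramer'[of u v M w] by (simp add: field_simps)

lemma cv_app: "om u v \<noteq> 0 \<Longrightarrow> cv u v (app M w) = cu u v w * c21 u v M + cv u v w * c22 u v M"
  unfolding cu_def cv_def c21_def c22_def
  using cramer2'[of u v M w] by (simp add: field_simps)

lemma app_mult: "app (M ** N) w = app M (app N w)"
  by (simp add: app_def matrix_matrix_mult_def sum_2 algebra_simps)

lemma app_id: "app (mat 1) w = w"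
  by (simp add: app_def mat_def)

context
  fixes u v :: "real \<times> real"
  assumes d: "om u v \<noteq> 0"
begin

lemma cuv_base [simp]: "cu u v u = 1" "cv u v u = 0" "cu u v v = 0" "cv u v v = 1"
  using d by (simp_all add: cu_def cv_def om_self)

lemma c_mult:
  "c11 u v (M ** N) = c11 u v M * c11 u v N + c12 u v M * c21 u v N"
  "c21 u v (M ** N) = c21 u v M * c11 u v N + c22 u v M * c21 u v N"
  "c12 u v (M ** N) = c11 u v M * c12 u v N + c12 u v M * c22 u v N"
  "c22 u v (M ** N) = c21 u v M * c12 u v N + c22 u v M * c22 u v N"
  unfolding c11_def[of u v "M ** N"] c21_def[of u v "M ** N"] c12_def[of u v "M ** N"] c22_def[of u v "M ** N"]
    app_mult cu_app[OF d] cv_app[OF d]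
  by (simp_all add: c11_def c12_def c21_def c22_def algebra_simps)

lemma c_trace: "c11 u v M + c22 u v M = real_of_int (trace M)"
proof -
  have "om (app M u) v + om u (app M v) = real_of_int (trace M) * om u v"
    by (simp add: om_def app_def trace_def sum_2 algebra_simps)
  then show ?thesis using d by (simp add: c11_def c22_def cu_def cv_def field_simps)
qed

lemma c_det: "M \<in> SL2Z \<Longrightarrow> c11 u v M * c22 u v M - c12 u v M * c21 u v M = 1"
proof -
  assume M: "M \<in> SL2Z"
  have "om (app M u) v * om u (app M v) - om (app M v) v * om u (app M u)
    = (real_of_int (M$1$1) * real_of_int (M$2$2) - real_of_int (M$1$2) * real_of_int (M$2$1)) * (om u v)^2"
    by (simp add: om_def app_def power2_eq_square algebra_simps)
  then have "om (app M u) v * om u (app M v) - om (app M v) v * om u (app M u) = (om u v)^2"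
    using det1[OF M] by simp
  then show ?thesis using d
    by (simp add: c11_def c22_def c12_def c21_def cu_def cv_def field_simps power2_eq_square)
qed

lemma c_id: "c11 u v (mat 1) = 1" "c22 u v (mat 1) = 1" "c12 u v (mat 1) = 0" "c21 u v (mat 1) = 0"
  using d by (simp_all add: c11_def c22_def c12_def c21_def cu_def cv_def app_id om_self om_anti[of v u])

definition Kpos :: "imat \<Rightarrow> bool" where
  "Kpos M \<longleftrightarrow> c11 u v M > 0 \<and> c22 u v M > 0 \<and> c12 u v M \<ge> 0 \<and> c21 u v M \<ge> 0"

lemma Kpos_mult:
  assumes "Kpos M" "Kpos N" shows "Kpos (M ** N)"
proof -
  have h: "c11 u v M > 0" "c22 u v M > 0" "c12 u v M \<ge> 0" "c21 u v M \<ge> 0"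
    "c11 u v N > 0" "c22 u v N > 0" "c12 u v N \<ge> 0" "c21 u v N \<ge> 0"
    using assms unfolding Kpos_def by auto
  have 1: "0 < c11 u v M * c11 u v N + c12 u v M * c21 u v N"
    using h by (intro add_pos_nonneg mult_pos_pos mult_nonneg_nonneg) auto
  have 2: "0 < c21 u v M * c12 u v N + c22 u v M * c22 u v N"
    using h by (intro add_nonneg_pos mult_pos_pos mult_nonneg_nonneg) auto
  have 3: "0 \<le> c11 u v M * c12 u v N + c12 u v M * c22 u v N"
    using h by (intro add_nonneg_nonneg mult_nonneg_nonneg) auto
  have 4: "0 \<le> c21 u v M * c11 u v N + c22 u v M * c21 u v N"
    using h by (intro add_nonneg_nonneg mult_nonneg_nonneg) auto
  show ?thesis unfolding Kpos_def c_mult using 1 2 3 4 by simp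
qed

lemma Kpos_id: "Kpos (mat 1)"
  unfolding Kpos_def c_id by simp

lemma Kpos_word: "Kpos A \<Longrightarrow> Kpos B \<Longrightarrow> Kpos (phi A B w)"
proof (induction w)
  case Nil then show ?case by (simp add: Kpos_id)
next
  case (Cons c w)
  then show ?case by (cases c) (auto intro: Kpos_mult)
qed

end

lemma alg1:
  fixes d c1 c2 b21 a12 lam mu :: real
  assumes d: "d \<noteq> 0" and mu: "mu > 1" and lam: "lam > 0"
    and e: "c1 * b21 + c2 * mu = c2 / mu"
    and P: "(d * (c1 * (c2 / lam) - c2 * (c1 * lam + c2 * a12))) * (d * b21) < 0"
  shows "a12 * b21 > (lam - 1/lam) * (mu - 1/mu)"
proof -
  define l where "l = lam - 1/lam"
  define m where "m = mu - 1/mu"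
  have hm: "c2 * m = - c1 * b21" using e mu unfolding m_def by (simp add: field_simps)
  define P where "P = (d * (c1 * (c2 / lam) - c2 * (c1 * lam + c2 * a12))) * (d * b21)"
  have P1: "P = - (d^2 * b21 * c2 * (c1 * l + c2 * a12))"
    unfolding P_def l_def using lam by (simp add: field_simps power2_eq_square)
  have "P * m^2 = - (d^2 * b21 * (c2 * m) * (c1 * l * m + (c2 * m) * a12))"
    unfolding P1 by (simp add: power2_eq_square algebra_simps)
  also have "\<dots> = d^2 * c1^2 * b21^2 * (l * m - a12 * b21)"
    unfolding hm by (simp add: power2_eq_square algebra_simps)
  finally have eq: "P * m^2 = d^2 * c1^2 * b21^2 * (l * m - a12 * b21)" .
  have "m > 0" using mu unfolding m_def by (simp add: field_simps) (metis less_1_mult)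
  then have "P * m^2 < 0" using P P_def by (simp add: mult_neg_pos)
  then have "d^2 * c1^2 * b21^2 * (l * m - a12 * b21) < 0" using eq by simp
  then have "l * m - a12 * b21 < 0"
    by (metis mult_nonneg_nonneg not_less zero_le_power2 mult_nonneg_nonpos)
  then show ?thesis unfolding l_def m_def by simp
qed

lemma alg2:
  fixes d e1 e2 b21 a12 lam mu :: real
  assumes d: "d \<noteq> 0" and mu: "mu > 1" and lam: "lam \<ge> 1"
    and e: "e1 * lam + e2 * a12 = e1 / lam"
    and P: "(- d * a12) * (d * (e1 * (e1 * b21 + e2 * mu) - e2 * (e1 / mu))) < 0"
  shows "a12 * b21 > (lam - 1/lam) * (mu - 1/mu)"
proof -
  define l where "l = lam - 1/lam"
  define m where "m = mu - 1/mu"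
  have l0: "l \<ge> 0" using lam unfolding l_def by (simp add: field_simps) (metis mult_mono' order.trans zero_le_one mult_1_right)
  have hl: "e1 * l = - e2 * a12" using e lam unfolding l_def by (simp add: field_simps)
  define P where "P = (- d * a12) * (d * (e1 * (e1 * b21 + e2 * mu) - e2 * (e1 / mu)))"
  have P': "P = - (d^2 * a12 * e1 * (e1 * b21 + e2 * m))"
    unfolding P_def m_def using mu by (simp add: field_simps power2_eq_square)
  have Pn: "P < 0" using P P_def by simp
  show ?thesis
  proof (cases "l = 0")
    case True
    then have "e2 * a12 = 0" using hl by simp
    moreover have "a12 \<noteq> 0" using Pn P' by auto
    ultimately have "e2 = 0" by simp
    then have "P = - (d^2 * e1^2 * (a12 * b21))" using P' by (simp add: power2_eq_square algebra_simps)
    then have "d^2 * e1^2 * (a12 * b21) > 0" using Pn by simp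
    then have "a12 * b21 > 0"
      by (metis mult_nonneg_nonneg not_less zero_le_power2 mult_nonneg_nonpos)
    then show ?thesis using True unfolding l_def m_def by simp
  next
    case False
    then have lp: "l > 0" using l0 by simp
    have "P * l^2 = - (d^2 * a12 * (e1 * l) * ((e1 * l) * b21 + e2 * m * l))"
      unfolding P' by (simp add: power2_eq_square algebra_simps)
    also have "\<dots> = - (d^2 * a12^2 * e2^2 * (a12 * b21 - l * m))"
      unfolding hl by (simp add: power2_eq_square algebra_simps)
    finally have eq: "P * l^2 = - (d^2 * a12^2 * e2^2 * (a12 * b21 - l * m))" .
    have "P * l^2 < 0" using Pn lp by (simp add: mult_neg_pos)
    then have "d^2 * a12^2 * e2^2 * (a12 * b21 - l * m) > 0" using eq by simp
    then have "a12 * b21 - l * m > 0"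
      by (metis mult_nonneg_nonneg not_less zero_le_power2 mult_nonneg_nonpos)
    then show ?thesis unfolding l_def m_def by simp
  qed
qed

lemma alg4:
  fixes lam mu :: real
  assumes lam: "lam \<ge> 1" and mu: "mu > 1" and t: "mu + 1/mu \<ge> lam + 1/lam + 1"
  shows "mu - lam \<ge> 1" "mu \<ge> lam + 1/lam"
proof -
  define k where "k = 1 - 1/(lam*mu)"
  have lm: "lam * mu > 1" using lam mu by (metis less_le_trans mult_less_cancel_left1 mult_le_cancel_right1 less_imp_le zero_less_one mult_1)
  then have k0: "k > 0" unfolding k_def by (simp add: field_simps)
  have k1: "k \<le> 1" unfolding k_def using lm by simp
  have "(mu - lam) * k = (mu + 1/mu) - (lam + 1/lam)"
    unfolding k_def using lam mu by (simp add: field_simps)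
  then have p: "(mu - lam) * k \<ge> 1" using t by simp
  then have "mu - lam > 0" using k0 by (metis not_less mult_nonpos_nonneg less_imp_le zero_less_one order.strict_trans2 not_one_le_zero)
  then have "(mu - lam) * k \<le> mu - lam" using k1 by (simp add: mult_left_le)
  then show 1: "mu - lam \<ge> 1" using p by simp
  have "1/lam \<le> 1" using lam by simp
  then show "mu \<ge> lam + 1/lam" using 1 by simp
qed

lemma alg3:
  fixes lam mu :: real
  assumes lam: "lam \<ge> 1" and mu: "mu > 1" and x3: "lam + 1/lam \<ge> 3" and D: "mu - lam \<ge> 1"
  shows "lam/mu + (lam - 1/lam) * (mu - 1/mu) - lam^2 \<ge> 0"
proof -
  have "lam * lam \<ge> 3 * lam - 1" using x3 lam by (simp add: field_simps)
  then have a: "lam^2 - 1 - lam \<ge> 0" using lam by (simp add: power2_eq_square)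
  have b: "lam^2 - 1 \<ge> 0" using a lam by simp
  have "(lam^2 - 1) * (mu - lam) \<ge> (lam^2 - 1) * 1" using D b by (rule mult_left_mono)
  then have h1: "lam^2 * (mu - lam) - mu \<ge> 0" using a by (simp add: algebra_simps)
  have eq: "(lam/mu + (lam - 1/lam) * (mu - 1/mu) - lam^2) * (lam * mu) = mu * (lam^2 * (mu - lam) - mu) + 1"
    using lam mu by (simp add: field_simps power2_eq_square power3_eq_cube)
  have "mu * (lam^2 * (mu - lam) - mu) \<ge> 0" using h1 mu by simp
  then have "(lam/mu + (lam - 1/lam) * (mu - 1/mu) - lam^2) * (lam * mu) > 0" using eq by simp
  moreover have "lam * mu > 0" using lam mu by simp
  ultimately show ?thesis by (simp add: zero_less_mult_iff)
qed

lemma cu_sm: "cu u v (sm k w) = k * cu u v w" and cv_sm: "cv u v (sm k w) = k * cv u v w"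
  by (simp_all add: cu_def cv_def om_sm1 om_sm2)

lemma om_coord:
  assumes "om u v \<noteq> 0"
  shows "om w1 w2 = om u v * (cu u v w1 * cv u v w2 - cv u v w1 * cu u v w2)"
proof -
  have "om w1 w2 * (om u v * om u v) = om u v * (om w1 v * om u w2 - om u w1 * om w2 v)"
    by (simp add: om_def algebra_simps)
  then show ?thesis using assms by (simp add: cu_def cv_def field_simps)
qed

lemma c_neg:
  assumes "om u v \<noteq> 0"
  shows "c11 u (sm (-1) v) M = c11 u v M" "c21 u (sm (-1) v) M = - c21 u v M"
        "c12 u (sm (-1) v) M = - c12 u v M" "c22 u (sm (-1) v) M = c22 u v M"
  by (simp_all add: c11_def c21_def c12_def c22_def cu_def cv_def om_sm1 om_sm2 app_sm)

lemma final:
  assumes A: "A \<in> SL2Z" and B: "B \<in> SL2Z" and d: "om u v \<noteq> 0"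
    and eA: "app A u = sm lam u" and eB: "app B v = sm mu v"
    and lam: "lam \<ge> 1" and mu: "mu > 1"
    and a12: "c12 u v A \<ge> 0" and b21: "c21 u v B \<ge> 0"
    and z11: "lam/mu + c12 u v A * c21 u v B - lam^2 \<ge> 0"
    and zz: "mu \<ge> lam + 1/lam"
  shows "trace (A ** (B ** phi A B x)) > trace (A ** (A ** phi A B x))"
proof -
  have cA1: "c11 u v A = lam" "c21 u v A = 0"
    using d by (simp_all add: c11_def c21_def eA cu_sm cv_sm)
  have cB1: "c12 u v B = 0" "c22 u v B = mu"
    using d by (simp_all add: c12_def c22_def eB cu_sm cv_sm)
  have "lam * c22 u v A = 1" using c_det[OF d A] cA1 by simp
  then have cA2: "c22 u v A = 1/lam" using lam by (simp add: field_simps)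
  have "c11 u v B * mu = 1" using c_det[OF d B] cB1 by simp
  then have cB2: "c11 u v B = 1/mu" using mu by (simp add: field_simps)
  have KA: "Kpos u v A" unfolding Kpos_def[OF d] using cA1 cA2 a12 lam by simp
  have KB: "Kpos u v B" unfolding Kpos_def[OF d] using cB1 cB2 b21 mu by simp
  define X where "X = phi A B x"
  have KX: "Kpos u v X" unfolding X_def using Kpos_word[OF d KA KB] .
  then have x: "c11 u v X > 0" "c22 u v X > 0" "c12 u v X \<ge> 0" "c21 u v X \<ge> 0"
    unfolding Kpos_def[OF d] by auto
  define a where "a = c12 u v A"
  define b where "b = c21 u v B"
  have eq: "real_of_int (trace (A ** (B ** X))) - real_of_int (trace (A ** (A ** X)))
     = (lam/mu + a * b - lam^2) * c11 u v X + a * (mu - lam - 1/lam) * c21 u v X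
       + (b / lam) * c12 u v X + (mu / lam - 1 / lam^2) * c22 u v X"
    unfolding c_trace[OF d, symmetric] c_mult[OF d] cA1 cA2 cB1 cB2 a_def[symmetric] b_def[symmetric]
    using lam mu by (simp add: field_simps power2_eq_square)
  have t1: "(lam/mu + a * b - lam^2) * c11 u v X \<ge> 0" using z11 x unfolding a_def b_def by simp
  have t2: "a * (mu - lam - 1/lam) * c21 u v X \<ge> 0" using zz a12 x unfolding a_def by simp
  have t3: "(b / lam) * c12 u v X \<ge> 0" using b21 lam x unfolding b_def by simp
  have "lam * mu > 1" using lam mu by (metis less_le_trans mult_less_cancel_left1 mult_le_cancel_right1 less_imp_le zero_less_one mult_1)
  then have "mu / lam - 1 / lam^2 > 0" using lam by (simp add: field_simps power2_eq_square)
  then have t4: "(mu / lam - 1 / lam^2) * c22 u v X > 0" using x by simp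
  have "real_of_int (trace (A ** (B ** X))) - real_of_int (trace (A ** (A ** X))) > 0"
    unfolding eq using t1 t2 t3 t4 by linarith
  then show ?thesis unfolding X_def by simp
qed

lemma core:
  fixes A B :: "int^2^2"
  assumes A: "A \<in> SL2Z" and B: "B \<in> SL2Z"
    and nc: "A ** B \<noteq> B ** A"
    and wo: "well_oriented A B"
    and trA: "2 \<le> trace A" and trAB: "trace A < trace B"
  shows "trace (A ** (B ** phi A B x)) > trace (A ** (A ** phi A B x))"
proof -
  have AI: "A \<noteq> mat 1" using nc by auto
  define C where "C = inv2 B"
  have C: "C \<in> SL2Z" unfolding C_def using inv2_SL[OF B] .
  have trC: "trace C = trace B" unfolding C_def by (rule trace_inv2)
  have CI: "C \<noteq> mat 1" using trC trAB trA trace_mat1 by auto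
  have BC: "inv2 C = B" unfolding C_def by (rule inv2_inv2)
  interpret fA: fixpt A using A trA AI by unfold_locales auto
  interpret fC: fixpt C using C trC trAB trA CI by unfold_locales auto
  define lam where "lam = fA.lam"
  define mu where "mu = fC.lam"
  have lam1: "lam \<ge> 1" unfolding lam_def by (rule fA.lam_ge1)
  have lamp: "fA.lam' = 1/lam" using fA.lam_prod lam1 unfolding lam_def by (simp add: field_simps)
  have mup: "fC.lam' = 1/mu" using fC.lam_prod fC.lam_ge1 unfolding mu_def by (simp add: field_simps)
  have xs: "lam + 1/lam = real_of_int (trace A)"
    using fA.lam_sum lamp unfolding lam_def fA.T_def by simp
  have ys: "mu + 1/mu = real_of_int (trace B)"
    using fC.lam_sum mup trC unfolding mu_def fC.T_def by simp
  have mu1: "mu > 1"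
  proof -
    have "mu \<ge> 1" unfolding mu_def by (rule fC.lam_ge1)
    moreover have "mu \<noteq> 1"
    proof
      assume "mu = 1"
      then have "real_of_int (trace B) = 2" using ys by simp
      then show False using trA trAB by simp
    qed
    ultimately show ?thesis by simp
  qed
  have lam0: "lam > 0" using lam1 by simp
  have mu0: "mu > 0" using mu1 by simp
  define u where "u = pv (attr_fix A)"
  define u' where "u' = pv (rep_fix A)"
  define g where "g = pv (attr_fix C)"
  define v where "v = pv (rep_fix C)"
  have eu: "app A u = sm lam u" unfolding u_def lam_def by (rule fA.attr_eig)
  have eu': "app A u' = sm (1/lam) u'" unfolding u'_def using fA.rep_eig lamp by simp
  have eg: "app C g = sm mu g" unfolding g_def mu_def by (rule fC.attr_eig)
  have ev: "app C v = sm (1/mu) v" unfolding v_def using fC.rep_eig mup by simp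
  have eBg: "app B g = sm (1/mu) g" using app_inv2_eig[OF C eg] mu0 BC by simp
  have eBv: "app B v = sm mu v" using app_inv2_eig[OF C ev] mu0 BC by simp
  have eAi: "app (inv2 A) u' = sm lam u'" using app_inv2_eig[OF A eu'] lam0 by simp
  have ncoh: "\<not> coherently_oriented A C" using wo unfolding well_oriented_def C_def by simp
  have key: "QF A g * QF B u < 0 \<or> QF A v * QF B u' < 0"
  proof -
    from ncoh consider "\<not> I_exists A C (attr_fix A) (attr_fix C)"
      | "\<not> I_exists (inv2 A) (inv2 C) (rep_fix A) (rep_fix C)"
      unfolding coherently_oriented_def by blast
    then show ?thesis
    proof cases
      case 1
      have "QF A g * QF C u > 0"
        using I_nec[OF A C eu[unfolded u_def] lam0 eg[unfolded g_def] mu0 1] unfolding u_def g_def .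
      moreover have "QF C u = - QF B u" unfolding C_def by (rule QF_inv2)
      ultimately show ?thesis by simp
    next
      case 2
      have "app (inv2 C) v = sm mu v" using BC eBv by simp
      then have "QF (inv2 A) v * QF (inv2 C) u' > 0"
        using I_nec[OF inv2_SL[OF A] inv2_SL[OF C] eAi[unfolded u'_def] lam0 _ mu0 2] unfolding u'_def v_def
        by simp
      then show ?thesis using BC by (simp add: QF_inv2)
    qed
  qed
  have d: "om u v \<noteq> 0"
  proof
    assume h: "om u v = 0"
    have "v \<noteq> (0,0)" unfolding v_def by (rule vec_nz)
    then obtain k where k: "u = sm k v" using om_zero_par h by blast
    have "QF B u = 0" unfolding k QF_sm using eig_QF[OF eBv] by simp
    have "om v u = 0" using h om_anti[of v u] by simp
    moreover have "u \<noteq> (0,0)" unfolding u_def by (rule vec_nz)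
    ultimately obtain k' where k': "v = sm k' u" using om_zero_par by blast
    have "QF A v = 0" unfolding k' QF_sm using eig_QF[OF eu] by simp
    show False using key \<open>QF B u = 0\<close> \<open>QF A v = 0\<close> by simp
  qed
  define a where "a = c12 u v A"
  define b where "b = c21 u v B"
  have cA1: "c11 u v A = lam" "c21 u v A = 0"
    using d by (simp_all add: c11_def c21_def eu cu_sm cv_sm)
  have cB1: "c12 u v B = 0" "c22 u v B = mu"
    using d by (simp_all add: c12_def c22_def eBv cu_sm cv_sm)
  have "lam * c22 u v A = 1" using c_det[OF d A] cA1 by simp
  then have cA2: "c22 u v A = 1/lam" using lam0 by (simp add: field_simps)
  have "c11 u v B * mu = 1" using c_det[OF d B] cB1 by simp
  then have cB2: "c11 u v B = 1/mu" using mu0 by (simp add: field_simps)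
  have big: "a * b > (lam - 1/lam) * (mu - 1/mu)"
    using key
  proof
    assume K: "QF A g * QF B u < 0"
    define c1 where "c1 = cu u v g"
    define c2 where "c2 = cv u v g"
    have "cv u v (app B g) = c1 * b + c2 * mu"
      unfolding cv_app[OF d] c1_def c2_def b_def cB1 by simp
    moreover have "cv u v (app B g) = c2 / mu" unfolding eBg cv_sm c2_def by simp
    ultimately have e: "c1 * b + c2 * mu = c2 / mu" by simp
    have QA: "QF A g = om u v * (c1 * (c2 / lam) - c2 * (c1 * lam + c2 * a))"
      unfolding QF_def om_coord[OF d, of g "app A g"] cu_app[OF d] cv_app[OF d] cA1 cA2 a_def[symmetric]
        c1_def[symmetric] c2_def[symmetric] by simp
    have QB: "QF B u = om u v * b"
      using d unfolding QF_def b_def c21_def cv_def by simp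
    show ?thesis using alg1[OF d mu1 lam0 e] K unfolding QA QB by simp
  next
    assume K: "QF A v * QF B u' < 0"
    define e1 where "e1 = cu u v u'"
    define e2 where "e2 = cv u v u'"
    have "cu u v (app A u') = e1 * lam + e2 * a"
      unfolding cu_app[OF d] e1_def e2_def a_def cA1 by simp
    moreover have "cu u v (app A u') = e1 / lam" unfolding eu' cu_sm e1_def by simp
    ultimately have e: "e1 * lam + e2 * a = e1 / lam" by simp
    have QA: "QF A v = - om u v * a"
      unfolding QF_def om_coord[OF d, of v "app A v"] cu_app[OF d] cv_app[OF d] a_def[symmetric]
      using d by simp
    have QB: "QF B u' = om u v * (e1 * (e1 * b + e2 * mu) - e2 * (e1 / mu))"
      unfolding QF_def om_coord[OF d, of u' "app B u'"] cu_app[OF d] cv_app[OF d] cB1 cB2 b_def[symmetric]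
        e1_def[symmetric] e2_def[symmetric] by simp
    show ?thesis using alg2[OF d mu1 lam1 e] K unfolding QA QB by simp
  qed
  have lm0: "(lam - 1/lam) * (mu - 1/mu) \<ge> 0"
  proof -
    have "1/lam \<le> lam" using lam1 by (simp add: field_simps) (metis mult_mono' order.trans zero_le_one mult_1_right)
    moreover have "1/mu \<le> mu" using mu1 by (simp add: field_simps) (metis less_1_mult less_imp_le)
    ultimately show ?thesis by simp
  qed
  have ab0: "a * b > 0" using big lm0 by simp
  have tB: "mu + 1/mu \<ge> lam + 1/lam + 1" using xs ys trAB by simp
  note A4 = alg4[OF lam1 mu1 tB]
  have z11: "lam/mu + a * b - lam^2 \<ge> 0"
  proof (cases "trace A = 2")
    case True
    then have "lam + 1/lam = 2" using xs by simp
    then have "(lam - 1)^2 = 0" using lam0 by (simp add: field_simps power2_eq_square)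
    then have l1: "lam = 1" by simp
    have "real_of_int (trace (A ** B)) = c11 u v (A ** B) + c22 u v (A ** B)"
      using c_trace[OF d] by simp
    also have "\<dots> = 1/mu + a * b + mu"
      unfolding c_mult[OF d] cA1 cA2 cB1 cB2 a_def[symmetric] b_def[symmetric] l1 by simp
    finally have "a * b = real_of_int (trace (A ** B) - trace B)" using ys by simp
    then have "a * b \<ge> 1" using ab0 by (metis of_int_0_less_iff of_int_1_le_iff zless_imp_add1_zle add_0)
    moreover have "1/mu > 0" using mu0 by simp
    moreover have "lam/mu + a * b - lam^2 = 1/mu + a * b - 1" using l1 by simp
    ultimately show ?thesis by linarith
  next
    case False
    then have "trace A \<ge> 3" using trA by simp
    then have "lam + 1/lam \<ge> 3" using xs by simp
    then have "lam/mu + (lam - 1/lam) * (mu - 1/mu) - lam^2 \<ge> 0" using alg3[OF lam1 mu1 _ A4(1)] by simp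
    then show ?thesis using big by simp
  qed
  show ?thesis
  proof (cases "a \<ge> 0")
    case True
    then have "b \<ge> 0" using ab0 by (simp add: zero_less_mult_iff)
    then show ?thesis using final[OF A B d eu eBv lam1 mu1] True A4(2) z11 unfolding a_def b_def by simp
  next
    case False
    then have "b < 0" using ab0 by (simp add: zero_less_mult_iff)
    define v2 where "v2 = sm (-1) v"
    have d2: "om u v2 \<noteq> 0" using d unfolding v2_def by (simp add: om_sm2)
    have eB2: "app B v2 = sm mu v2" unfolding v2_def app_sm eBv by (simp add: sm_def)
    have c2: "c12 u v2 A = - a" "c21 u v2 B = - b"
      unfolding v2_def c_neg[OF d] a_def b_def by simp_all
    show ?thesis using final[OF A B d2 eu eB2 lam1 mu1] c2 False \<open>b < 0\<close> A4(2) z11 by simp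
  qed
qed

lemma phi_append: "phi A B (x @ y) = phi A B x ** phi A B y"
proof (induction x)
  case Nil then show ?case by simp
next
  case (Cons c x)
  then show ?case by (cases c) (simp_all add: matrix_mul_assoc)
qed

theorem lemma5p5:
  fixes A B :: "int^2^2"
  assumes "A \<in> SL2Z" and "B \<in> SL2Z"
    and "A ** B \<noteq> B ** A"
    and "well_oriented A B"
    and "2 \<le> trace A" and "trace A < trace B"
    and "n \<ge> 1"
    and "length w = n"
    and "\<forall>u. length u = n \<longrightarrow> wtr A B u \<le> wtr A B w"
  shows "\<not> has_factor [La, La] w"
proof
  assume "has_factor [La, La] w"
  then obtain p q where w: "w = p @ [La, La] @ q" unfolding has_factor_def by blast
  define u1 where "u1 = La # Lb # (q @ p)"
  have len: "length u1 = n" using assms(8) w unfolding u1_def by simp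
  have "wtr A B w = trace (phi A B p ** phi A B ([La, La] @ q))"
    unfolding wtr_def w phi_append by simp
  also have "\<dots> = trace (phi A B ([La, La] @ q) ** phi A B p)" by (rule trace_mul_sym)
  also have "\<dots> = trace (A ** (A ** phi A B (q @ p)))"
    by (simp add: phi_append matrix_mul_assoc)
  finally have e0: "wtr A B w = trace (A ** (A ** phi A B (q @ p)))" .
  have e1: "wtr A B u1 = trace (A ** (B ** phi A B (q @ p)))"
    unfolding wtr_def u1_def by simp
  have "wtr A B u1 > wtr A B w"
    unfolding e0 e1 by (rule core[OF assms(1-6)])
  moreover have "wtr A B u1 \<le> wtr A B w" using assms(9) len by blast
  ultimately show False by simp
qed

end
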